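(* Let $X$ be a topological space, $x\in X$, and $\mathcal B_x$ a local base at $x$. Then $\bigcap\{\overline{B}:B\in\mathcal B_x\}$ equals the union of all finitely non-Hausdorff subsets of $X$ that contain $x$, and it also equals the union of all maximal finitely non-Hausdorff subsets of $X$ that contain $x$.
   Context: A non-empty subset $A$ of a topological space $X$ is called finitely non-Hausdorff if for every non-empty finite subset $F\subseteq A$ and every family $\{U_y:y\in F\}$ where each $U_y$ is an open neighborhood of $y$, we have $\bigcap_{y\in F}U_y\neq\emptyset$. It is maximal finitely non-Hausdorff if no finitely non-Hausdorff subset of $X$ properly contains it. *)

theory Defs
  imports "HOL-Analysis.Analysis"
begin

definition local_base :: "'a topology \<Rightarrow> 'a \<Rightarrow> 'a set set \<Rightarrow> bool" where
  "local_base X x \<B> \<longleftrightarrow>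
     (\<forall>B\<in>\<B>. openin X B \<and> x \<in> B) \<and>
     (\<forall>U. openin X U \<and> x \<in> U \<longrightarrow> (\<exists>B\<in>\<B>. B \<subseteq> U))"

definition finitely_non_hausdorff :: "'a topology \<Rightarrow> 'a set \<Rightarrow> bool" where
  "finitely_non_hausdorff X A \<longleftrightarrow>
     A \<noteq> {} \<and> A \<subseteq> topspace X \<and>
     (\<forall>F U. finite F \<and> F \<noteq> {} \<and> F \<subseteq> A \<and>
            (\<forall>y\<in>F. openin X (U y) \<and> y \<in> U y) \<longrightarrow> (\<Inter>y\<in>F. U y) \<noteq> {})"

definition max_finitely_non_hausdorff :: "'a topology \<Rightarrow> 'a set \<Rightarrow> bool" where
  "max_finitely_non_hausdorff X A \<longleftrightarrow>
     finitely_non_hausdorff X A \<and>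
     (\<forall>B. finitely_non_hausdorff X B \<and> A \<subseteq> B \<longrightarrow> B = A)"

end

theory Submission
  imports Defs
begin

lemma two_sub: "F \<noteq> {} \<Longrightarrow> F \<subseteq> {x,y} \<Longrightarrow> F = {x} \<or> F = {y} \<or> F = {x,y}"
proof (cases "x \<in> F"; cases "y \<in> F")
  assume "F \<subseteq> {x,y}" "x \<in> F" "y \<in> F" then show ?thesis by blast
next
  assume "F \<subseteq> {x,y}" "x \<in> F" "y \<notin> F" then show ?thesis by blast
next
  assume "F \<subseteq> {x,y}" "x \<notin> F" "y \<in> F" then show ?thesis by blast
next
  assume "F \<noteq> {}" "F \<subseteq> {x,y}" "x \<notin> F" "y \<notin> F" then show ?thesis by blast
qed

lemma fnh_chain:
  assumes ne: "C \<noteq> {}" and ch: "subset.chain {A. finitely_non_hausdorff X A \<and> S \<subseteq> A} C"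
  shows "\<Union>C \<in> {A. finitely_non_hausdorff X A \<and> S \<subseteq> A}"
proof -
  have sub: "C \<subseteq> {A. finitely_non_hausdorff X A \<and> S \<subseteq> A}"
    using ch by (auto simp: subset.chain_def)
  obtain A0 where A0: "A0 \<in> C" using ne by blast
  have "finitely_non_hausdorff X (\<Union>C)"
    unfolding finitely_non_hausdorff_def
  proof (intro conjI allI impI)
    have "A0 \<noteq> {}" using A0 sub by (auto simp: finitely_non_hausdorff_def)
    then show "\<Union>C \<noteq> {}" using A0 by blast
    show "\<Union>C \<subseteq> topspace X" using sub by (auto simp: finitely_non_hausdorff_def)
    fix F U assume h: "finite F \<and> F \<noteq> {} \<and> F \<subseteq> \<Union>C \<and> (\<forall>y\<in>F. openin X (U y) \<and> y \<in> U y)"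
    have hf: "finite F" "F \<subseteq> \<Union>C" using h by simp_all
    obtain B where "B \<in> C" "F \<subseteq> B"
      using finite_subset_Union_chain[OF hf ne ch] by blast
    then have "finitely_non_hausdorff X B" using sub by auto
    then have all: "\<forall>F U. finite F \<and> F \<noteq> {} \<and> F \<subseteq> B \<and>
            (\<forall>y\<in>F. openin X (U y) \<and> y \<in> U y) \<longrightarrow> (\<Inter>y\<in>F. U y) \<noteq> {}"
      unfolding finitely_non_hausdorff_def by (elim conjE)
    show "(\<Inter>y\<in>F. U y) \<noteq> {}" using h \<open>F \<subseteq> B\<close> all[rule_format, of F U] by blast
  qed
  moreover have "S \<subseteq> \<Union>C" using A0 sub by auto
  ultimately show ?thesis by simp
qed

lemma fnh_max_exists:
  assumes "finitely_non_hausdorff X S"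
  shows "\<exists>M. max_finitely_non_hausdorff X M \<and> S \<subseteq> M"
proof -
  let ?A = "{A. finitely_non_hausdorff X A \<and> S \<subseteq> A}"
  have "\<exists>M\<in>?A. \<forall>Y\<in>?A. M \<subseteq> Y \<longrightarrow> Y = M"
  proof (rule subset_Zorn_nonempty)
    show "?A \<noteq> {}" using assms by blast
  next
    fix C assume "C \<noteq> {}" "subset.chain ?A C"
    then show "\<Union>C \<in> ?A" by (rule fnh_chain)
  qed
  then obtain M where M: "M \<in> ?A" and mx: "\<forall>Y\<in>?A. M \<subseteq> Y \<longrightarrow> Y = M" by (elim bexE)
  have "max_finitely_non_hausdorff X M"
    unfolding max_finitely_non_hausdorff_def
  proof (intro conjI allI impI)
    show "finitely_non_hausdorff X M" using M by simp
    fix B assume "finitely_non_hausdorff X B \<and> M \<subseteq> B"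
    moreover then have "B \<in> ?A" using M by auto
    ultimately show "B = M" using mx by simp
  qed
  moreover have "S \<subseteq> M" using M by simp
  ultimately show ?thesis by (intro exI conjI)
qed

theorem lemma2p9:
  fixes X :: "'a topology" and x :: 'a and \<B> :: "'a set set"
  assumes "x \<in> topspace X" and "local_base X x \<B>"
  shows "(\<Inter>B\<in>\<B>. X closure_of B) = \<Union>{A. finitely_non_hausdorff X A \<and> x \<in> A} \<and>
         (\<Inter>B\<in>\<B>. X closure_of B) = \<Union>{A. max_finitely_non_hausdorff X A \<and> x \<in> A}"
proof -
  have lb1: "\<And>B. B \<in> \<B> \<Longrightarrow> openin X B \<and> x \<in> B"
    and lb2: "\<And>U. openin X U \<Longrightarrow> x \<in> U \<Longrightarrow> \<exists>B\<in>\<B>. B \<subseteq> U"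
    using assms(2) unfolding local_base_def by auto
  have Bne: "\<B> \<noteq> {}" using lb2[of "topspace X"] assms(1) by auto
  have key: "y \<in> (\<Inter>B\<in>\<B>. X closure_of B) \<Longrightarrow> finitely_non_hausdorff X {x, y}" for y
  proof -
    assume y: "y \<in> (\<Inter>B\<in>\<B>. X closure_of B)"
    then obtain B0 where "B0 \<in> \<B>" "y \<in> X closure_of B0" using Bne by blast
    then have yt: "y \<in> topspace X" using closure_of_subset_topspace[of X B0] by blast
    show ?thesis unfolding finitely_non_hausdorff_def
    proof (intro conjI allI impI)
      show "{x, y} \<noteq> {}" by simp
      show "{x, y} \<subseteq> topspace X" using yt assms(1) by simp
      fix F U assume h: "finite F \<and> F \<noteq> {} \<and> F \<subseteq> {x, y} \<and> (\<forall>z\<in>F. openin X (U z) \<and> z \<in> U z)"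
      show "(\<Inter>z\<in>F. U z) \<noteq> {}"
      proof (cases "F = {x, y}")
        case True
        then have ux: "openin X (U x)" "x \<in> U x" and uy: "openin X (U y)" "y \<in> U y" using h by auto
        obtain B where B: "B \<in> \<B>" "B \<subseteq> U x" using lb2 ux by blast
        have "y \<in> X closure_of B" using y B by blast
        then have "U y \<inter> B \<noteq> {}" using uy by (auto simp: in_closure_of)
        then show ?thesis using True B by auto
      next
        case False
        have "F \<noteq> {}" "F \<subseteq> {x,y}" using h by simp_all
        then have "F = {x} \<or> F = {y}" using False two_sub[of F x y] by blast
        then obtain z where z: "F = {z}" by blast
        then have "z \<in> U z" using h by simp
        then show ?thesis using z by auto
      qed
    qed
  qed
  have bck: "finitely_non_hausdorff X A \<Longrightarrow> x \<in> A \<Longrightarrow> y \<in> A \<Longrightarrow> y \<in> (\<Inter>B\<in>\<B>. X closure_of B)" for A y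
  proof -
    assume A: "finitely_non_hausdorff X A" "x \<in> A" "y \<in> A"
    have yt: "y \<in> topspace X" using A unfolding finitely_non_hausdorff_def by blast
    show ?thesis
    proof
      fix B assume B: "B \<in> \<B>"
      show "y \<in> X closure_of B" unfolding in_closure_of
      proof (intro conjI allI impI yt)
        fix U assume U: "y \<in> U \<and> openin X U"
        define V where "V = (\<lambda>z. (if z = y then U else topspace X) \<inter> (if z = x then B else topspace X))"
        have vv: "\<forall>z\<in>{x,y}. openin X (V z) \<and> z \<in> V z"
          using U lb1[OF B] assms(1) yt openin_subset[of X U] openin_subset[of X B]
          by (auto simp: V_def)
        have "(\<Inter>z\<in>{x,y}. V z) \<noteq> {}"
        proof -
          have "finite {x,y}" "{x,y} \<noteq> {}" "{x,y} \<subseteq> A" using A by auto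
          moreover have all: "\<forall>F U. finite F \<and> F \<noteq> {} \<and> F \<subseteq> A \<and>
            (\<forall>y\<in>F. openin X (U y) \<and> y \<in> U y) \<longrightarrow> (\<Inter>y\<in>F. U y) \<noteq> {}"
            using A(1) unfolding finitely_non_hausdorff_def by (elim conjE)
          ultimately show ?thesis using vv all[rule_format, of "{x,y}" V] by blast
        qed
        moreover have "(\<Inter>z\<in>{x,y}. V z) \<subseteq> U \<inter> B" by (auto simp: V_def split: if_splits)
        ultimately show "\<exists>y. y \<in> B \<and> y \<in> U" by blast
      qed
    qed
  qed
  have e1: "(\<Inter>B\<in>\<B>. X closure_of B) = \<Union>{A. finitely_non_hausdorff X A \<and> x \<in> A}"
  proof
    show "(\<Inter>B\<in>\<B>. X closure_of B) \<subseteq> \<Union>{A. finitely_non_hausdorff X A \<and> x \<in> A}"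
      using key by blast
    show "\<Union>{A. finitely_non_hausdorff X A \<and> x \<in> A} \<subseteq> (\<Inter>B\<in>\<B>. X closure_of B)"
      using bck by blast
  qed
  have e2: "(\<Inter>B\<in>\<B>. X closure_of B) = \<Union>{A. max_finitely_non_hausdorff X A \<and> x \<in> A}"
  proof
    show "(\<Inter>B\<in>\<B>. X closure_of B) \<subseteq> \<Union>{A. max_finitely_non_hausdorff X A \<and> x \<in> A}"
    proof
      fix y assume "y \<in> (\<Inter>B\<in>\<B>. X closure_of B)"
      then obtain M where "max_finitely_non_hausdorff X M" "{x,y} \<subseteq> M"
        using key fnh_max_exists by blast
      then show "y \<in> \<Union>{A. max_finitely_non_hausdorff X A \<and> x \<in> A}" by blast
    qed
    show "\<Union>{A. max_finitely_non_hausdorff X A \<and> x \<in> A} \<subseteq> (\<Inter>B\<in>\<B>. X closure_of B)"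
      using bck unfolding max_finitely_non_hausdorff_def by blast
  qed
  show ?thesis using e1 e2 by simp
qed

end
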